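(* Assume (A1) and (A2) at time $k$, let $\phi$ satisfy (A3) at time $k$, and suppose that for a constant $\widetilde C_{k|k-1}$ independent of $N$, $\mathbb{E}|\langle\widetilde\pi^N_{k|k-1},\beta_k\rangle-\langle\pi_{k|k-1},\beta_k\rangle|^4\le\widetilde C_{k|k-1}\|\beta_k\|_\infty^4/N^2$ and $\mathbb{E}|\langle\widetilde\pi^N_{k|k-1},\beta_k\phi\rangle-\langle\pi_{k|k-1},\beta_k\phi\rangle|^4\le\widetilde C_{k|k-1}\|\beta_k\|_\infty^4\|\phi\|^4_{k-1,4}/N^2$. Then $$\mathbb{E}\big|\langle\widetilde\pi^N_{k|k},\phi\rangle-\langle\pi_{k|k},\phi\rangle\big|^4\le\widetilde C_{k|k}\frac{\|\phi\|^4_{k-1,4}}{N^2},\qquad \widetilde C_{k|k}^{1/4}=\frac{\widetilde C_{k|k-1}^{1/4}\|\beta_k\|_\infty}{\gamma_k\langle\pi_{k|k-1},\beta_k\rangle}\big(\|\beta_k\phi\|_\infty+\gamma_k\big).$$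
   Context: Notation: for a measure $\nu$ and function $\phi$, $\langle\nu,\phi\rangle=\int\phi\,d\nu$; $\|f\|_\infty$ is the supremum norm. Fixed data: integer $k\ge1$; deterministic vectors $\mathbf{x}_0,\dots,\mathbf{x}_k\in\mathbb{R}^{n_x}$ (defender's true states) and $\mathbf{a}_1,\dots,\mathbf{a}_k\in\mathbb{R}^{n_a}$ (defender's observations); a conditional density $\rho(\mathbf{y}|\mathbf{x})$ in $\mathbf{y}\in\mathbb{R}^{n_y}$; a conditional density $\beta(\mathbf{a}|\hat{\mathbf{x}})$ in $\mathbf{a}\in\mathbb{R}^{n_a}$, $\hat{\mathbf{x}}\in\mathbb{R}^{n_x}$; measurable maps $T_s:\mathbb{R}^{n_x}\times\mathbb{R}^{n_y}\to\mathbb{R}^{n_x}$, $s=1,\dots,k$ (the attacker's forward-filter update $\hat{\mathbf{x}}_s=T_s(\hat{\mathbf{x}}_{s-1},\mathbf{y}_s)$). Write $\beta_s(\hat{\mathbf{x}},\mathbf{y})=\beta(\mathbf{a}_s|\hat{\mathbf{x}})$ and, for a function $\psi$ of $(\hat{\mathbf{x}},\mathbf{y})$, $(\delta_T\rho\psi)_s(\hat{\mathbf{x}}',\mathbf{y}')=\int\psi(T_s(\hat{\mathbf{x}}',\mathbf{y}),\mathbf{y})\rho(\mathbf{y}|\mathbf{x}_s)\,d\mathbf{y}$ (abbreviated $\delta_T\rho\psi$). Optimal inverse filter: probability measures on $\mathbb{R}^{n_x}\times\mathbb{R}^{n_y}$ defined from $\pi_{0|0}=\pi_0$ by $\langle\pi_{s|s-1},\psi\rangle=\langle\pi_{s-1|s-1},\delta_T\rho\psi\rangle$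 and $\langle\pi_{s|s},\psi\rangle=\langle\pi_{s|s-1},\beta_s\psi\rangle/\langle\pi_{s|s-1},\beta_s\rangle$. I-PF with $N$ particles and thresholds $\gamma_s>0$: draw $\hat{\mathbf{x}}^i_0$ i.i.d. from a given distribution $\widetilde\pi^x_0$ and, independently, $\mathbf{y}^i_0$ i.i.d. from $\rho(\cdot|\mathbf{x}_0)$, $i=1,\dots,N$; $\pi_0$ is the (product) law of $(\hat{\mathbf{x}}^i_0,\mathbf{y}^i_0)$ and $\pi^N_{0|0}=\frac1N\sum_i\delta_{(\hat{\mathbf{x}}^i_0,\mathbf{y}^i_0)}$. For $s\ge1$, given particles $(\hat{\mathbf{x}}^i_{s-1},\mathbf{y}^i_{s-1})$: (1) draw conditionally i.i.d. $\bar{\mathbf{y}}^i_s\sim\rho(\cdot|\mathbf{x}_s)$ and set $\bar{\hat{\mathbf{x}}}^i_s=T_s(\hat{\mathbf{x}}^i_{s-1},\bar{\mathbf{y}}^i_s)$; (2) if $\frac1N\sum_i\beta(\mathbf{a}_s|\bar{\hat{\mathbf{x}}}^i_s)\ge\gamma_s$, accept and set $(\tilde{\hat{\mathbf{x}}}^i_s,\tilde{\mathbf{y}}^i_s)=(\bar{\hat{\mathbf{x}}}^i_s,\bar{\mathbf{y}}^i_s)$; otherwise redo (1) independently; (3) set $\widetilde\pi^N_{s|s-1}=\frac1N\sum_i\delta_{(\tilde{\hat{\mathbf{x}}}^i_s,\tilde{\mathbf{y}}^i_s)}$, weights $\omega^i_s=\beta(\mathbf{a}_s|\tilde{\hat{\mathbf{x}}}^i_s)/\sum_j\beta(\mathbf{a}_s|\tilde{\hat{\mathbf{x}}}^j_s)$,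 $\widetilde\pi^N_{s|s}=\sum_i\omega^i_s\delta_{(\tilde{\hat{\mathbf{x}}}^i_s,\tilde{\mathbf{y}}^i_s)}$; (4) draw $N$ conditionally i.i.d. $(\hat{\mathbf{x}}^i_s,\mathbf{y}^i_s)\sim\widetilde\pi^N_{s|s}$ and set $\pi^N_{s|s}=\frac1N\sum_i\delta_{(\hat{\mathbf{x}}^i_s,\mathbf{y}^i_s)}$. Expectations $\mathbb{E}$ are over the particle randomness. Norm: $\|\phi\|_{s,4}=\max\{1,\max_{0\le r\le s}\langle\pi_{r|r},|\phi|^4\rangle^{1/4}\}$. Assumptions: (A1) for $s=1,\dots,k$, $\langle\pi_{s|s-1},\beta_s\rangle>0$ and $0<\gamma_s<\langle\pi_{s|s-1},\beta_s\rangle$. (A2) $\beta(\mathbf{a}_s|\cdot)$ and $\rho(\cdot|\mathbf{x}_s)$ are bounded for $s=1,\dots,k$. (A3) for $s=1,\dots,k$, $\sup_{(\hat{\mathbf{x}},\mathbf{y})}|\phi(\hat{\mathbf{x}},\mathbf{y})|^4\beta(\mathbf{a}_s|\hat{\mathbf{x}})<\infty$. By construction (step (2)), $\langle\widetilde\pi^N_{k|k-1},\beta_k\rangle\ge\gamma_k$. *)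

theory Defs
  imports "HOL-Probability.Probability"
begin

definition ykernel :: "('y::euclidean_space \<Rightarrow> 'x::euclidean_space \<Rightarrow> real) \<Rightarrow> 'x \<Rightarrow> 'y measure" where
  "ykernel rho x = density lborel (\<lambda>y. ennreal (rho y x))"

text \<open>Prediction kernel at time s: (xh',y') maps to the law of (T_s(xh',y), y), y ~ rho(.|x_s).
  Integrating psi against it gives (delta_T rho psi)_s(xh',y').\<close>
definition pred_kernel ::
  "(nat \<Rightarrow> 'x::euclidean_space \<Rightarrow> 'y::euclidean_space \<Rightarrow> 'x) \<Rightarrow> ('y \<Rightarrow> 'x \<Rightarrow> real) \<Rightarrow> (nat \<Rightarrow> 'x)
    \<Rightarrow> nat \<Rightarrow> 'x \<times> 'y \<Rightarrow> ('x \<times> 'y) measure" where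
  "pred_kernel T rho xs s p = distr (ykernel rho (xs s)) borel (\<lambda>y. (T s (fst p) y, y))"

definition corr_step :: "('x \<Rightarrow> real) \<Rightarrow> ('x \<times> 'y) measure \<Rightarrow> ('x \<times> 'y) measure" where
  "corr_step b M = density M (\<lambda>p. ennreal (b (fst p) / (\<integral>q. b (fst q) \<partial>M)))"

text \<open>Optimal inverse filter pi_{s|s}; pi_{0|0} = pi_0 = product of the prior and rho(.|x_0).\<close>
primrec opt_filt ::
  "'x::euclidean_space measure \<Rightarrow> (nat \<Rightarrow> 'x \<Rightarrow> 'y::euclidean_space \<Rightarrow> 'x) \<Rightarrow> ('y \<Rightarrow> 'x \<Rightarrow> real)
    \<Rightarrow> ('a \<Rightarrow> 'x \<Rightarrow> real) \<Rightarrow> (nat \<Rightarrow> 'x) \<Rightarrow> (nat \<Rightarrow> 'a) \<Rightarrow> nat \<Rightarrow> ('x \<times> 'y) measure" where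
  "opt_filt pix0 T rho beta xs as 0 = pix0 \<Otimes>\<^sub>M ykernel rho (xs 0)"
| "opt_filt pix0 T rho beta xs as (Suc s) =
     corr_step (beta (as (Suc s)))
       (opt_filt pix0 T rho beta xs as s \<bind> pred_kernel T rho xs (Suc s))"

text \<open>Optimal prediction pi_{s|s-1} (for s >= 1).\<close>
definition opt_pred ::
  "'x::euclidean_space measure \<Rightarrow> (nat \<Rightarrow> 'x \<Rightarrow> 'y::euclidean_space \<Rightarrow> 'x) \<Rightarrow> ('y \<Rightarrow> 'x \<Rightarrow> real)
    \<Rightarrow> ('a \<Rightarrow> 'x \<Rightarrow> real) \<Rightarrow> (nat \<Rightarrow> 'x) \<Rightarrow> (nat \<Rightarrow> 'a) \<Rightarrow> nat \<Rightarrow> ('x \<times> 'y) measure" where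
  "opt_pred pix0 T rho beta xs as s =
     opt_filt pix0 T rho beta xs as (s - 1) \<bind> pred_kernel T rho xs s"

text \<open>Fourth power of the norm: phi_norm4 = (||phi||_{s,4})^4
  = max 1 (max_{r<=s} <pi_{r|r}, |phi|^4>), valued in ennreal (may be infinite).\<close>
definition phi_norm4 ::
  "'x::euclidean_space measure \<Rightarrow> (nat \<Rightarrow> 'x \<Rightarrow> 'y::euclidean_space \<Rightarrow> 'x) \<Rightarrow> ('y \<Rightarrow> 'x \<Rightarrow> real)
    \<Rightarrow> ('a \<Rightarrow> 'x \<Rightarrow> real) \<Rightarrow> (nat \<Rightarrow> 'x) \<Rightarrow> (nat \<Rightarrow> 'a) \<Rightarrow> ('x \<times> 'y \<Rightarrow> real) \<Rightarrow> nat \<Rightarrow> ennreal" where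
  "phi_norm4 pix0 T rho beta xs as phi s =
     max 1 (Max ((\<lambda>r. \<integral>\<^sup>+p. ennreal (\<bar>phi p\<bar> ^ 4) \<partial>(opt_filt pix0 T rho beta xs as r)) ` {..s}))"

definition sup_norm :: "('b \<Rightarrow> real) \<Rightarrow> real" where
  "sup_norm f = (SUP z. \<bar>f z\<bar>)"

text \<open>Integral of psi against the random empirical measure (1/N) sum_i delta_{P w i}
  (the I-PF prediction tilde pi^N_{k|k-1}).\<close>
definition emp_pred :: "('w \<Rightarrow> nat \<Rightarrow> 'p) \<Rightarrow> nat \<Rightarrow> ('p \<Rightarrow> real) \<Rightarrow> 'w \<Rightarrow> real" where
  "emp_pred P N psi w = (\<Sum>i<N. psi (P w i)) / real N"

text \<open>Integral of phi against the weighted measure tilde pi^N_{k|k} = sum_i omega_i delta_{P w i},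
  omega_i = b(xh_i) / sum_j b(xh_j).\<close>
definition emp_upd :: "('x \<Rightarrow> real) \<Rightarrow> ('w \<Rightarrow> nat \<Rightarrow> 'x \<times> 'y) \<Rightarrow> nat \<Rightarrow> ('x \<times> 'y \<Rightarrow> real) \<Rightarrow> 'w \<Rightarrow> real" where
  "emp_upd b P N phi w =
     (\<Sum>i<N. (b (fst (P w i)) / (\<Sum>j<N. b (fst (P w j)))) * phi (P w i))"

end

theory Submission
  imports Defs
begin


lemma cs2:
  fixes a b x y :: real
  assumes "0 \<le> a" "0 \<le> b"
  shows "(a*x+b*y)^2 \<le> (a+b)*(a*x^2+b*y^2)"
proof -
  have "(a+b)*(a*x^2+b*y^2) - (a*x+b*y)^2 = a*b*(x-y)^2" by (simp add: algebra_simps power2_eq_square)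
  moreover have "a*b*(x-y)^2 \<ge> 0" using assms by simp
  ultimately show ?thesis by linarith
qed

lemma pow4_conv:
  fixes a b x y :: real
  assumes "0 \<le> a" "0 \<le> b"
  shows "(a*x+b*y)^4 \<le> (a+b)^3*(a*x^4+b*y^4)"
proof -
  have 1: "(a*x+b*y)^2 \<le> (a+b)*(a*x^2+b*y^2)" by (rule cs2[OF assms])
  have 2: "(a*x^2+b*y^2)^2 \<le> (a+b)*(a*(x^2)^2+b*(y^2)^2)" by (rule cs2[OF assms])
  have "(a*x+b*y)^4 = ((a*x+b*y)^2)^2" by simp
  also have "\<dots> \<le> ((a+b)*(a*x^2+b*y^2))^2"
    using 1 by (intro power_mono) auto
  also have "\<dots> = (a+b)^2*(a*x^2+b*y^2)^2" by (simp add: power_mult_distrib)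
  also have "\<dots> \<le> (a+b)^2*((a+b)*(a*(x^2)^2+b*(y^2)^2))"
    using 2 assms by (intro mult_left_mono) auto
  also have "\<dots> = (a+b)^3*(a*x^4+b*y^4)" by (simp add: algebra_simps power2_eq_square power3_eq_cube power4_eq_xxxx)
  finally show ?thesis .
qed

theorem claim1:
  fixes pix0 :: "'x::euclidean_space measure"
    and T :: "nat \<Rightarrow> 'x \<Rightarrow> 'y::euclidean_space \<Rightarrow> 'x"
    and rho :: "'y \<Rightarrow> 'x \<Rightarrow> real"
    and beta :: "'a::euclidean_space \<Rightarrow> 'x \<Rightarrow> real"
    and xs :: "nat \<Rightarrow> 'x" and as :: "nat \<Rightarrow> 'a" and gamma :: "nat \<Rightarrow> real"
    and k N :: nat and phi :: "'x \<times> 'y \<Rightarrow> real"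
    and M :: "'w measure" and P :: "'w \<Rightarrow> nat \<Rightarrow> 'x \<times> 'y" and Ct :: real
  assumes prior: "prob_space pix0" "sets pix0 = sets borel"
    and rho_meas: "(\<lambda>(y, x). rho y x) \<in> borel_measurable borel"
    and rho_nonneg: "\<forall>y x. 0 \<le> rho y x"
    and rho_dens: "\<forall>x. (\<integral>\<^sup>+y. ennreal (rho y x) \<partial>lborel) = 1"
    and beta_meas: "(\<lambda>(a, x). beta a x) \<in> borel_measurable borel"
    and beta_nonneg: "\<forall>a x. 0 \<le> beta a x"
    and beta_dens: "\<forall>x. (\<integral>\<^sup>+a. ennreal (beta a x) \<partial>lborel) = 1"
    and T_meas: "\<forall>s. (\<lambda>(x, y). T s x y) \<in> borel_measurable borel"
    and k: "1 \<le> k" and N: "1 \<le> N"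
    and A1: "0 < (\<integral>p. beta (as k) (fst p) \<partial>(opt_pred pix0 T rho beta xs as k))"
            "0 < gamma k"
            "gamma k < (\<integral>p. beta (as k) (fst p) \<partial>(opt_pred pix0 T rho beta xs as k))"
    and A2: "bounded (range (beta (as k)))" "bounded (range (\<lambda>y. rho y (xs k)))"
    and phi_meas: "phi \<in> borel_measurable borel"
    and A3: "bounded (range (\<lambda>p. \<bar>phi p\<bar> ^ 4 * beta (as k) (fst p)))"
    and M: "prob_space M"
    and P_meas: "\<forall>i<N. (\<lambda>w. P w i) \<in> measurable M borel"
    and accept: "\<forall>w\<in>space M. gamma k \<le> emp_pred P N (\<lambda>p. beta (as k) (fst p)) w"
    and Ct: "0 \<le> Ct"
    and hyp1: "(\<integral>\<^sup>+w. ennreal (\<bar>emp_pred P N (\<lambda>p. beta (as k) (fst p)) w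
                 - (\<integral>p. beta (as k) (fst p) \<partial>(opt_pred pix0 T rho beta xs as k))\<bar> ^ 4) \<partial>M)
             \<le> ennreal (Ct * sup_norm (beta (as k)) ^ 4 / real N ^ 2)"
    and hyp2: "(\<integral>\<^sup>+w. ennreal (\<bar>emp_pred P N (\<lambda>p. beta (as k) (fst p) * phi p) w
                 - (\<integral>p. beta (as k) (fst p) * phi p \<partial>(opt_pred pix0 T rho beta xs as k))\<bar> ^ 4) \<partial>M)
             \<le> ennreal (Ct * sup_norm (beta (as k)) ^ 4 / real N ^ 2)
                 * phi_norm4 pix0 T rho beta xs as phi (k - 1)"
  shows "(\<integral>\<^sup>+w. ennreal (\<bar>emp_upd (beta (as k)) P N phi w
                 - (\<integral>p. phi p \<partial>(opt_filt pix0 T rho beta xs as k))\<bar> ^ 4) \<partial>M)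
         \<le> ennreal ((root 4 Ct * sup_norm (beta (as k))
                 / (gamma k * (\<integral>p. beta (as k) (fst p) \<partial>(opt_pred pix0 T rho beta xs as k)))
                 * (sup_norm (\<lambda>p. beta (as k) (fst p) * phi p) + gamma k)) ^ 4 / real N ^ 2)
             * phi_norm4 pix0 T rho beta xs as phi (k - 1)"
proof -
  define b where "b = beta (as k)"
  define Q where "Q = opt_pred pix0 T rho beta xs as k"
  define A where "A = (\<integral>p. b (fst p) \<partial>Q)"
  define C where "C = (\<integral>p. b (fst p) * phi p \<partial>Q)"
  define g where "g = (\<lambda>p. b (fst p) * phi p)"
  define S where "S = sup_norm g"
  define D where "D = root 4 Ct * sup_norm b"
  define \<Phi> where "\<Phi> = phi_norm4 pix0 T rho beta xs as phi (k - 1)"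
  define \<gamma> where "\<gamma> = gamma k"
  define X where "X = emp_pred P N (\<lambda>p. b (fst p))"
  define Y where "Y = emp_pred P N g"
  have Apos: "0 < A" using A1 by (simp add: A_def b_def Q_def)
  have gpos: "0 < \<gamma>" using A1 by (simp add: \<gamma>_def)
  have bnn: "\<And>x. 0 \<le> b x" using beta_nonneg by (simp add: b_def)
  have bmeas: "b \<in> borel_measurable borel"
  proof -
    have "(\<lambda>x. (as k, x)) \<in> borel_measurable borel"
      by (intro borel_measurable_continuous_onI continuous_intros)
    from measurable_compose[OF this beta_meas] show ?thesis by (simp add: b_def)
  qed
  have bfmeas: "(\<lambda>p::'x\<times>'y. b (fst p)) \<in> borel_measurable borel"
    using measurable_compose[OF measurable_fst bmeas] by (simp add: borel_prod[symmetric])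
  have gmeas: "g \<in> borel_measurable borel"
    unfolding g_def using bfmeas phi_meas by measurable
  obtain Mb where Mb: "\<And>x. \<bar>b x\<bar> \<le> Mb"
    using A2(1) unfolding bounded_iff b_def by (auto simp: real_norm_def)
  have Sb: "0 \<le> sup_norm b"
  proof -
    have "\<bar>b undefined\<bar> \<le> (SUP z. \<bar>b z\<bar>)"
      by (rule cSUP_upper) (use Mb in \<open>auto intro!: bdd_aboveI2\<close>)
    thus ?thesis unfolding sup_norm_def by linarith
  qed
  have D0: "0 \<le> D" unfolding D_def using Ct Sb by simp
  obtain M3 where M3': "\<forall>z\<in>range (\<lambda>p. \<bar>phi p\<bar> ^ 4 * b (fst p)). norm z \<le> M3"
    using A3 unfolding bounded_iff b_def by blast
  have M3: "\<And>p. \<bar>phi p\<bar> ^ 4 * b (fst p) \<le> M3"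
  proof -
    fix p
    have "norm (\<bar>phi p\<bar> ^ 4 * b (fst p)) \<le> M3" using M3' by blast
    thus "\<bar>phi p\<bar> ^ 4 * b (fst p) \<le> M3" unfolding real_norm_def by (meson abs_ge_self order_trans)
  qed
  have gb: "\<And>p. \<bar>g p\<bar> \<le> max 1 (M3 * Mb^3)"
  proof -
    fix p
    have "\<bar>g p\<bar>^4 = (\<bar>phi p\<bar> ^ 4 * b (fst p)) * b (fst p)^3"
      by (simp add: g_def abs_mult power_mult_distrib bnn power4_eq_xxxx power3_eq_cube)
    also have "\<dots> \<le> M3 * Mb^3"
    proof (rule mult_mono)
      show "\<bar>phi p\<bar> ^ 4 * b (fst p) \<le> M3" by (rule M3)
      show "b (fst p)^3 \<le> Mb^3" using Mb[of "fst p"] bnn[of "fst p"] by (intro power_mono) auto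
      show "0 \<le> M3" using M3[of p] bnn[of "fst p"] by (meson order_trans zero_le_mult_iff zero_le_power abs_ge_zero)
      show "0 \<le> b (fst p)^3" using bnn by simp
    qed
    finally have h: "\<bar>g p\<bar>^4 \<le> M3 * Mb^3" .
    show "\<bar>g p\<bar> \<le> max 1 (M3 * Mb^3)"
    proof (cases "\<bar>g p\<bar> \<le> 1")
      case False
      hence "\<bar>g p\<bar> \<le> \<bar>g p\<bar>^4" by (intro self_le_power) auto
      with h show ?thesis by linarith
    qed simp
  qed
  have gS: "\<And>p. \<bar>g p\<bar> \<le> S"
    unfolding S_def sup_norm_def by (rule cSUP_upper) (use gb in \<open>auto intro!: bdd_aboveI2\<close>)
  have S0: "0 \<le> S" using gS[of undefined] by linarith
  have Qdef: "opt_filt pix0 T rho beta xs as k = corr_step b Q"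
  proof -
    obtain j where j: "k = Suc j" using k by (cases k) auto
    show ?thesis by (simp add: j Q_def opt_pred_def b_def)
  qed
  have setsQ: "sets Q = sets (borel :: ('x\<times>'y) measure)"
  proof (cases "space (opt_filt pix0 T rho beta xs as (k - 1)) = {}")
    case True
    then have "Q = count_space {}" by (simp add: Q_def opt_pred_def bind_def)
    then have "A = 0" by (simp add: A_def Bochner_Integration.integral_empty)
    with Apos show ?thesis by simp
  next
    case False
    show ?thesis unfolding Q_def opt_pred_def
      by (rule sets_bind[OF _ False]) (simp add: pred_kernel_def)
  qed
  have target: "(\<integral>p. phi p \<partial>(opt_filt pix0 T rho beta xs as k)) = C / A"
  proof -
    have m1: "(\<lambda>p. b (fst p) / A) \<in> borel_measurable Q"
      using bfmeas by (simp add: measurable_cong_sets[OF setsQ refl])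
    have m2: "phi \<in> borel_measurable Q"
      using phi_meas by (simp add: measurable_cong_sets[OF setsQ refl])
    have "(\<integral>p. phi p \<partial>(opt_filt pix0 T rho beta xs as k))
        = (\<integral>p. phi p \<partial>density Q (\<lambda>p. ennreal (b (fst p) / A)))"
      by (simp add: Qdef corr_step_def A_def)
    also have "\<dots> = (\<integral>p. (b (fst p) / A) *\<^sub>R phi p \<partial>Q)"
      by (rule integral_density[OF m2 m1]) (use bnn Apos in auto)
    also have "\<dots> = (\<integral>p. b (fst p) * phi p / A \<partial>Q)" by simp
    also have "\<dots> = C / A" unfolding C_def by (rule integral_divide_zero)
    finally show ?thesis .
  qed
  define \<alpha> where "\<alpha> = 1 / A"
  define \<beta> where "\<beta> = S / (\<gamma> * A)"
  have a0: "0 \<le> \<alpha>" using Apos by (simp add: \<alpha>_def)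
  have b0: "0 \<le> \<beta>" using Apos gpos S0 by (simp add: \<beta>_def)
  have X_eq: "X w = (\<Sum>i<N. b (fst (P w i))) / real N" for w by (simp add: X_def emp_pred_def)
  have Y_eq: "Y w = (\<Sum>i<N. g (P w i)) / real N" for w by (simp add: Y_def emp_pred_def)
  have eu: "emp_upd b P N phi w = Y w / X w" for w
  proof -
    have "emp_upd b P N phi w = (\<Sum>i<N. b (fst (P w i)) * phi (P w i)) / (\<Sum>j<N. b (fst (P w j)))"
      unfolding emp_upd_def by (simp add: sum_divide_distrib)
    also have "\<dots> = Y w / X w" using N by (simp add: X_eq Y_eq g_def)
    finally show ?thesis .
  qed
  have Xm: "X \<in> borel_measurable M"
    unfolding X_eq[abs_def]
    by (intro borel_measurable_divide borel_measurable_sum measurable_compose[OF _ bfmeas] borel_measurable_const)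
       (use P_meas in auto)
  have Ym: "Y \<in> borel_measurable M"
    unfolding Y_eq[abs_def]
    by (intro borel_measurable_divide borel_measurable_sum measurable_compose[OF _ gmeas] borel_measurable_const)
       (use P_meas in auto)
  have pw: "ennreal (\<bar>emp_upd b P N phi w - C / A\<bar> ^ 4)
      \<le> ennreal ((\<alpha>+\<beta>)^3 * \<alpha>) * ennreal (\<bar>Y w - C\<bar> ^ 4) + ennreal ((\<alpha>+\<beta>)^3 * \<beta>) * ennreal (\<bar>X w - A\<bar> ^ 4)"
    if w: "w \<in> space M" for w
  proof -
    have Xg: "\<gamma> \<le> X w" using accept w by (simp add: \<gamma>_def X_def b_def)
    have Xp: "0 < X w" using Xg gpos by linarith
    have YS: "\<bar>Y w\<bar> \<le> S"
    proof -
      have "\<bar>\<Sum>i<N. g (P w i)\<bar> \<le> (\<Sum>i<N. \<bar>g (P w i)\<bar>)" by (rule sum_abs)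
      also have "\<dots> \<le> (\<Sum>i<N. S)" by (intro sum_mono gS)
      finally have "\<bar>\<Sum>i<N. g (P w i)\<bar> \<le> real N * S" by simp
      thus ?thesis using N by (simp add: Y_eq divide_le_eq mult.commute)
    qed
    have id: "Y w / X w - C / A = (Y w - C) / A + Y w * (A - X w) / (X w * A)"
      using Xp Apos by (simp add: field_simps)
    have t2: "\<bar>Y w * (A - X w) / (X w * A)\<bar> \<le> S * \<bar>X w - A\<bar> / (\<gamma> * A)"
    proof -
      have "\<bar>Y w * (A - X w) / (X w * A)\<bar> = \<bar>Y w\<bar> * \<bar>X w - A\<bar> / (X w * A)"
        using Xp Apos by (simp add: abs_mult abs_minus_commute)
      also have "\<dots> \<le> S * \<bar>X w - A\<bar> / (\<gamma> * A)"
        by (rule frac_le) (use S0 YS Xg gpos Apos in \<open>auto intro: mult_mono mult_right_mono\<close>)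
      finally show ?thesis .
    qed
    have "\<bar>emp_upd b P N phi w - C / A\<bar> \<le> \<alpha> * \<bar>Y w - C\<bar> + \<beta> * \<bar>X w - A\<bar>"
    proof -
      have "\<bar>emp_upd b P N phi w - C / A\<bar> \<le> \<bar>(Y w - C) / A\<bar> + \<bar>Y w * (A - X w) / (X w * A)\<bar>"
        unfolding eu id by (rule abs_triangle_ineq)
      also have "\<dots> \<le> \<alpha> * \<bar>Y w - C\<bar> + \<beta> * \<bar>X w - A\<bar>"
        using t2 Apos by (simp add: \<alpha>_def \<beta>_def)
      finally show ?thesis .
    qed
    then have "\<bar>emp_upd b P N phi w - C / A\<bar> ^ 4 \<le> (\<alpha> * \<bar>Y w - C\<bar> + \<beta> * \<bar>X w - A\<bar>) ^ 4"
      by (intro power_mono) auto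
    also have "\<dots> \<le> (\<alpha>+\<beta>)^3 * (\<alpha> * \<bar>Y w - C\<bar>^4 + \<beta> * \<bar>X w - A\<bar>^4)"
      by (rule pow4_conv[OF a0 b0])
    also have "\<dots> = (\<alpha>+\<beta>)^3 * \<alpha> * \<bar>Y w - C\<bar>^4 + (\<alpha>+\<beta>)^3 * \<beta> * \<bar>X w - A\<bar>^4"
      by (simp add: algebra_simps)
    finally show ?thesis using a0 b0
      by (simp add: ennreal_mult[symmetric] ennreal_plus[symmetric] del: ennreal_plus)
  qed
  have D4: "D ^ 4 = Ct * sup_norm b ^ 4"
    unfolding D_def using Ct by (simp add: power_mult_distrib real_root_pow_pos2)
  have h1: "(\<integral>\<^sup>+w. ennreal (\<bar>X w - A\<bar> ^ 4) \<partial>M) \<le> ennreal (D^4 / real N ^ 2)"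
    using hyp1 by (simp add: D4 X_def A_def b_def Q_def)
  have h2: "(\<integral>\<^sup>+w. ennreal (\<bar>Y w - C\<bar> ^ 4) \<partial>M) \<le> ennreal (D^4 / real N ^ 2) * \<Phi>"
    using hyp2 by (simp add: D4 Y_def C_def g_def b_def Q_def \<Phi>_def)
  have Phi1: "1 \<le> \<Phi>" unfolding \<Phi>_def phi_norm4_def by simp
  have "(\<integral>\<^sup>+w. ennreal (\<bar>emp_upd b P N phi w - C / A\<bar> ^ 4) \<partial>M)
      \<le> (\<integral>\<^sup>+w. ennreal ((\<alpha>+\<beta>)^3 * \<alpha>) * ennreal (\<bar>Y w - C\<bar> ^ 4) + ennreal ((\<alpha>+\<beta>)^3 * \<beta>) * ennreal (\<bar>X w - A\<bar> ^ 4) \<partial>M)"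
    by (rule nn_integral_mono) (rule pw)
  also have "\<dots> = ennreal ((\<alpha>+\<beta>)^3 * \<alpha>) * (\<integral>\<^sup>+w. ennreal (\<bar>Y w - C\<bar> ^ 4) \<partial>M)
       + ennreal ((\<alpha>+\<beta>)^3 * \<beta>) * (\<integral>\<^sup>+w. ennreal (\<bar>X w - A\<bar> ^ 4) \<partial>M)"
    using Xm Ym by (simp add: nn_integral_add nn_integral_cmult)
  also have "\<dots> \<le> ennreal ((\<alpha>+\<beta>)^3 * \<alpha>) * (ennreal (D^4 / real N ^ 2) * \<Phi>)
       + ennreal ((\<alpha>+\<beta>)^3 * \<beta>) * ennreal (D^4 / real N ^ 2)"
    by (intro add_mono mult_left_mono h1 h2) auto
  also have "\<dots> \<le> ennreal ((\<alpha>+\<beta>)^3 * \<alpha>) * (ennreal (D^4 / real N ^ 2) * \<Phi>)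
       + ennreal ((\<alpha>+\<beta>)^3 * \<beta>) * (ennreal (D^4 / real N ^ 2) * \<Phi>)"
  proof -
    have "ennreal (D^4 / real N ^ 2) \<le> ennreal (D^4 / real N ^ 2) * \<Phi>"
      using mult_left_mono[OF Phi1, of "ennreal (D^4 / real N ^ 2)"] by simp
    thus ?thesis by (intro add_mono mult_left_mono order_refl) auto
  qed
  also have "\<dots> = ennreal ((\<alpha>+\<beta>)^3 * \<alpha> * (D^4 / real N ^ 2) + (\<alpha>+\<beta>)^3 * \<beta> * (D^4 / real N ^ 2)) * \<Phi>"
  proof -
    have u: "0 \<le> (\<alpha>+\<beta>)^3 * \<alpha>" "0 \<le> (\<alpha>+\<beta>)^3 * \<beta>" "0 \<le> D^4 / real N ^ 2" using a0 b0 by auto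
    have "ennreal ((\<alpha>+\<beta>)^3 * \<alpha>) * (ennreal (D^4 / real N ^ 2) * \<Phi>)
       + ennreal ((\<alpha>+\<beta>)^3 * \<beta>) * (ennreal (D^4 / real N ^ 2) * \<Phi>)
       = (ennreal ((\<alpha>+\<beta>)^3 * \<alpha>) * ennreal (D^4 / real N ^ 2)
       + ennreal ((\<alpha>+\<beta>)^3 * \<beta>) * ennreal (D^4 / real N ^ 2)) * \<Phi>"
      by (simp add: distrib_right mult.assoc)
    also have "\<dots> = ennreal ((\<alpha>+\<beta>)^3 * \<alpha> * (D^4 / real N ^ 2) + (\<alpha>+\<beta>)^3 * \<beta> * (D^4 / real N ^ 2)) * \<Phi>"
      using u by (simp only: ennreal_mult[symmetric] ennreal_plus[symmetric] mult_nonneg_nonneg)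
    finally show ?thesis .
  qed
  also have "(\<alpha>+\<beta>)^3 * \<alpha> * (D^4 / real N ^ 2) + (\<alpha>+\<beta>)^3 * \<beta> * (D^4 / real N ^ 2)
      = (D / (\<gamma> * A) * (S + \<gamma>)) ^ 4 / real N ^ 2"
  proof -
    have "\<alpha> + \<beta> = (S + \<gamma>) / (\<gamma> * A)" using gpos Apos by (simp add: \<alpha>_def \<beta>_def field_simps)
    moreover have "(\<alpha>+\<beta>)^3 * \<alpha> * (D^4 / real N ^ 2) + (\<alpha>+\<beta>)^3 * \<beta> * (D^4 / real N ^ 2)
        = ((\<alpha>+\<beta>) * D)^4 / real N ^ 2" by (simp add: algebra_simps power4_eq_xxxx power3_eq_cube add_divide_distrib)
    ultimately show ?thesis by (simp add: mult.commute)
  qed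
  finally have main: "(\<integral>\<^sup>+w. ennreal (\<bar>emp_upd b P N phi w - C / A\<bar> ^ 4) \<partial>M)
      \<le> ennreal ((D / (\<gamma> * A) * (S + \<gamma>)) ^ 4 / real N ^ 2) * \<Phi>" .
  show ?thesis unfolding target using main
    by (simp add: b_def Q_def A_def C_def g_def S_def D_def \<Phi>_def \<gamma>_def)
qed


end
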